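(* Let $G$ be an upward planar single-source digraph with maximum in- and outdegree at most two. Then in every upward planar embedding of $G$ and for every face $f$, there are at most two edges that are bad with respect to $f$.
   Context: A planar drawing of a digraph is upward if every edge $(u,v)$ is drawn as a curve strictly increasing in $y$ from $u$ to $v$; an upward planar embedding is the equivalence class of upward planar drawings with the same left-to-right orderings of incoming edges and of outgoing edges around each vertex. A single-source digraph has exactly one vertex of indegree zero. If a vertex has two incoming (outgoing) edges, these are its left and right incoming (outgoing) edges according to the embedding. An edge $e=(u,v)$ is bad with respect to face $f$ if either $e$ is the left outgoing edge of $u$ and the left incoming edge of $v$ and $f$ is the face to the right of $e$, or $e$ is the right outgoing edge of $u$ and the right incoming edge of $v$ and $f$ is the face to the left of $e$. *)

theory Defs
  imports "HOL-Analysis.Analysis"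
begin

definition indeg :: "('v \<times> 'v) set \<Rightarrow> 'v \<Rightarrow> nat" where
  "indeg E v = card {u. (u, v) \<in> E}"

definition outdeg :: "('v \<times> 'v) set \<Rightarrow> 'v \<Rightarrow> nat" where
  "outdeg E u = card {v. (u, v) \<in> E}"

definition single_source :: "'v set \<Rightarrow> ('v \<times> 'v) set \<Rightarrow> bool" where
  "single_source V E \<longleftrightarrow> card {v \<in> V. indeg E v = 0} = 1"

definition upward_planar_drawing ::
  "'v set \<Rightarrow> ('v \<times> 'v) set \<Rightarrow> ('v \<Rightarrow> real \<times> real) \<Rightarrow> ('v \<times> 'v \<Rightarrow> real \<Rightarrow> real \<times> real) \<Rightarrow> bool" where
  "upward_planar_drawing V E p \<Gamma> \<longleftrightarrow>
     inj_on p V \<and>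
     (\<forall>e\<in>E. path (\<Gamma> e) \<and> pathstart (\<Gamma> e) = p (fst e) \<and> pathfinish (\<Gamma> e) = p (snd e) \<and>
        (\<forall>s t. 0 \<le> s \<and> s < t \<and> t \<le> 1 \<longrightarrow> snd (\<Gamma> e s) < snd (\<Gamma> e t))) \<and>
     (\<forall>e\<in>E. \<forall>w\<in>V. p w \<in> path_image (\<Gamma> e) \<longrightarrow> w = fst e \<or> w = snd e) \<and>
     (\<forall>e\<in>E. \<forall>e'\<in>E. e \<noteq> e' \<longrightarrow>
        path_image (\<Gamma> e) \<inter> path_image (\<Gamma> e') \<subseteq> p ` ({fst e, snd e} \<inter> {fst e', snd e'}))"

definition upward_planar :: "'v set \<Rightarrow> ('v \<times> 'v) set \<Rightarrow> bool" where
  "upward_planar V E \<longleftrightarrow> (\<exists>p \<Gamma>. upward_planar_drawing V E p \<Gamma>)"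

definition drawing_set ::
  "'v set \<Rightarrow> ('v \<times> 'v) set \<Rightarrow> ('v \<Rightarrow> real \<times> real) \<Rightarrow> ('v \<times> 'v \<Rightarrow> real \<Rightarrow> real \<times> real) \<Rightarrow> (real \<times> real) set" where
  "drawing_set V E p \<Gamma> = p ` V \<union> (\<Union>e\<in>E. path_image (\<Gamma> e))"

definition faces ::
  "'v set \<Rightarrow> ('v \<times> 'v) set \<Rightarrow> ('v \<Rightarrow> real \<times> real) \<Rightarrow> ('v \<times> 'v \<Rightarrow> real \<Rightarrow> real \<times> real) \<Rightarrow> (real \<times> real) set set" where
  "faces V E p \<Gamma> = components (- drawing_set V E p \<Gamma>)"

text \<open>Edge e lies to the left of edge e' just above their common tail
(compared at equal heights), resp. just below their common head.\<close>
definition left_at_start :: "('v \<times> 'v \<Rightarrow> real \<Rightarrow> real \<times> real) \<Rightarrow> 'v \<times> 'v \<Rightarrow> 'v \<times> 'v \<Rightarrow> bool" where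
  "left_at_start \<Gamma> e e' \<longleftrightarrow> (\<exists>\<delta>>0. \<forall>s\<in>{0<..1}. \<forall>t\<in>{0<..1}.
      snd (\<Gamma> e s) = snd (\<Gamma> e' t) \<and> snd (\<Gamma> e s) < snd (\<Gamma> e 0) + \<delta> \<longrightarrow> fst (\<Gamma> e s) < fst (\<Gamma> e' t))"

definition left_at_end :: "('v \<times> 'v \<Rightarrow> real \<Rightarrow> real \<times> real) \<Rightarrow> 'v \<times> 'v \<Rightarrow> 'v \<times> 'v \<Rightarrow> bool" where
  "left_at_end \<Gamma> e e' \<longleftrightarrow> (\<exists>\<delta>>0. \<forall>s\<in>{0..<1}. \<forall>t\<in>{0..<1}.
      snd (\<Gamma> e s) = snd (\<Gamma> e' t) \<and> snd (\<Gamma> e 1) - \<delta> < snd (\<Gamma> e s) \<longrightarrow> fst (\<Gamma> e s) < fst (\<Gamma> e' t))"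

definition left_out :: "('v \<times> 'v) set \<Rightarrow> ('v \<times> 'v \<Rightarrow> real \<Rightarrow> real \<times> real) \<Rightarrow> 'v \<times> 'v \<Rightarrow> bool" where
  "left_out E \<Gamma> e \<longleftrightarrow> (\<exists>e'\<in>E. e' \<noteq> e \<and> fst e' = fst e \<and> left_at_start \<Gamma> e e')"

definition right_out :: "('v \<times> 'v) set \<Rightarrow> ('v \<times> 'v \<Rightarrow> real \<Rightarrow> real \<times> real) \<Rightarrow> 'v \<times> 'v \<Rightarrow> bool" where
  "right_out E \<Gamma> e \<longleftrightarrow> (\<exists>e'\<in>E. e' \<noteq> e \<and> fst e' = fst e \<and> left_at_start \<Gamma> e' e)"

definition left_in :: "('v \<times> 'v) set \<Rightarrow> ('v \<times> 'v \<Rightarrow> real \<Rightarrow> real \<times> real) \<Rightarrow> 'v \<times> 'v \<Rightarrow> bool" where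
  "left_in E \<Gamma> e \<longleftrightarrow> (\<exists>e'\<in>E. e' \<noteq> e \<and> snd e' = snd e \<and> left_at_end \<Gamma> e e')"

definition right_in :: "('v \<times> 'v) set \<Rightarrow> ('v \<times> 'v \<Rightarrow> real \<Rightarrow> real \<times> real) \<Rightarrow> 'v \<times> 'v \<Rightarrow> bool" where
  "right_in E \<Gamma> e \<longleftrightarrow> (\<exists>e'\<in>E. e' \<noteq> e \<and> snd e' = snd e \<and> left_at_end \<Gamma> e' e)"

definition face_right_of :: "('v \<times> 'v \<Rightarrow> real \<Rightarrow> real \<times> real) \<Rightarrow> 'v \<times> 'v \<Rightarrow> (real \<times> real) set \<Rightarrow> bool" where
  "face_right_of \<Gamma> e f \<longleftrightarrow> (\<exists>s\<in>{0<..<1}. \<exists>\<epsilon>>0. \<forall>r\<in>{0<..<\<epsilon>}.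
      (fst (\<Gamma> e s) + r, snd (\<Gamma> e s)) \<in> f)"

definition face_left_of :: "('v \<times> 'v \<Rightarrow> real \<Rightarrow> real \<times> real) \<Rightarrow> 'v \<times> 'v \<Rightarrow> (real \<times> real) set \<Rightarrow> bool" where
  "face_left_of \<Gamma> e f \<longleftrightarrow> (\<exists>s\<in>{0<..<1}. \<exists>\<epsilon>>0. \<forall>r\<in>{0<..<\<epsilon>}.
      (fst (\<Gamma> e s) - r, snd (\<Gamma> e s)) \<in> f)"

definition bad_edge :: "('v \<times> 'v) set \<Rightarrow> ('v \<times> 'v \<Rightarrow> real \<Rightarrow> real \<times> real) \<Rightarrow> 'v \<times> 'v \<Rightarrow> (real \<times> real) set \<Rightarrow> bool" where
  "bad_edge E \<Gamma> e f \<longleftrightarrow>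
     (left_out E \<Gamma> e \<and> left_in E \<Gamma> e \<and> face_right_of \<Gamma> e f) \<or>
     (right_out E \<Gamma> e \<and> right_in E \<Gamma> e \<and> face_left_of \<Gamma> e f)"

end

theory Submission
  imports Defs
begin

locale drw =
  fixes V :: "'v set" and E :: "('v \<times> 'v) set" and p :: "'v \<Rightarrow> real \<times> real"
    and \<Gamma> :: "'v \<times> 'v \<Rightarrow> real \<Rightarrow> real \<times> real"
  assumes fin: "finite V" and sub: "E \<subseteq> V \<times> V" and dr: "upward_planar_drawing V E p \<Gamma>"
begin

lemma edge_path: "e \<in> E \<Longrightarrow> path (\<Gamma> e)"
  and edge_start: "e \<in> E \<Longrightarrow> \<Gamma> e 0 = p (fst e)"
  and edge_finish: "e \<in> E \<Longrightarrow> \<Gamma> e 1 = p (snd e)"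
  and edge_mono: "e \<in> E \<Longrightarrow> 0 \<le> s \<Longrightarrow> s < t \<Longrightarrow> t \<le> 1 \<Longrightarrow> snd (\<Gamma> e s) < snd (\<Gamma> e t)"
  using dr unfolding upward_planar_drawing_def pathstart_def pathfinish_def by auto

lemma vert_avoid: "e \<in> E \<Longrightarrow> w \<in> V \<Longrightarrow> p w \<in> path_image (\<Gamma> e) \<Longrightarrow> w = fst e \<or> w = snd e"
  using dr unfolding upward_planar_drawing_def by auto

lemma edge_disj: "e \<in> E \<Longrightarrow> e' \<in> E \<Longrightarrow> e \<noteq> e' \<Longrightarrow>
   path_image (\<Gamma> e) \<inter> path_image (\<Gamma> e') \<subseteq> p ` ({fst e, snd e} \<inter> {fst e', snd e'})"
  using dr unfolding upward_planar_drawing_def by auto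

lemma injp: "inj_on p V" using dr unfolding upward_planar_drawing_def by auto

lemma edge_up: "e \<in> E \<Longrightarrow> snd (p (fst e)) < snd (p (snd e))"
  using edge_mono[of e 0 1] edge_start edge_finish by auto

lemma edge_fun:
  assumes e: "e \<in> E"
  obtains g where "continuous_on UNIV g"
    "\<And>h. h \<le> snd (p (fst e)) \<Longrightarrow> g h = fst (p (fst e))"
    "\<And>h. h \<ge> snd (p (snd e)) \<Longrightarrow> g h = fst (p (snd e))"
    "\<And>h. h \<in> {snd (p (fst e))..snd (p (snd e))} \<Longrightarrow> \<exists>t\<in>{0..1}. \<Gamma> e t = (g h, h)"
    "\<And>t. t \<in> {0..1} \<Longrightarrow> fst (\<Gamma> e t) = g (snd (\<Gamma> e t))"
proof -
  define \<phi> where "\<phi> = (\<lambda>t. snd (\<Gamma> e t))"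
  have cG: "continuous_on {0..1} (\<Gamma> e)" using edge_path[OF e] by (simp add: path_def)
  have c\<phi>: "continuous_on {0..1} \<phi>" unfolding \<phi>_def by (intro continuous_intros cG)
  have mono: "\<And>s t. 0 \<le> s \<Longrightarrow> s < t \<Longrightarrow> t \<le> 1 \<Longrightarrow> \<phi> s < \<phi> t"
    using edge_mono[OF e] unfolding \<phi>_def by auto
  have inj: "inj_on \<phi> {0..1}"
  proof (rule inj_onI)
    fix x y assume "x \<in> {0..1}" "y \<in> {0..1}" "\<phi> x = \<phi> y"
    then show "x = y" using mono[of x y] mono[of y x] by (cases x y rule: linorder_cases) auto
  qed
  define \<tau> where "\<tau> = inv_into {0..1} \<phi>"
  have img: "\<phi> ` {0..1} = {\<phi> 0..\<phi> 1}"
  proof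
    show "\<phi> ` {0..1} \<subseteq> {\<phi> 0..\<phi> 1}"
    proof
      fix y assume "y \<in> \<phi> ` {0..1::real}"
      then obtain t where t: "t \<in> {0..1}" "y = \<phi> t" by auto
      then show "y \<in> {\<phi> 0..\<phi> 1}" using mono[of 0 t] mono[of t 1]
        by (cases "t = 0"; cases "t = 1") (auto simp: less_imp_le)
    qed
    show "{\<phi> 0..\<phi> 1} \<subseteq> \<phi> ` {0..1}"
    proof
      fix y assume "y \<in> {\<phi> 0..\<phi> 1}"
      then obtain t where "0 \<le> t" "t \<le> 1" "\<phi> t = y" using IVT'[of \<phi> 0 y 1] c\<phi> by auto
      then show "y \<in> \<phi> ` {0..1}" by auto
    qed
  qed
  have c\<tau>: "continuous_on {\<phi> 0..\<phi> 1} \<tau>"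
    using continuous_on_inv[OF c\<phi> compact_Icc] inj img unfolding \<tau>_def by auto
  have \<tau>in: "\<And>y. y \<in> {\<phi> 0..\<phi> 1} \<Longrightarrow> \<tau> y \<in> {0..1} \<and> \<phi> (\<tau> y) = y"
    using img unfolding \<tau>_def by (metis f_inv_into_f inv_into_into)
  have \<tau>\<phi>: "\<And>t. t \<in> {0..1} \<Longrightarrow> \<tau> (\<phi> t) = t" unfolding \<tau>_def using inj by auto
  define cl where "cl = (\<lambda>h. max (\<phi> 0) (min (\<phi> 1) h))"
  have le01: "\<phi> 0 \<le> \<phi> 1" using mono[of 0 1] by auto
  have ccl: "continuous_on UNIV cl" unfolding cl_def by (intro continuous_intros)
  have clin: "\<And>h. cl h \<in> {\<phi> 0..\<phi> 1}" unfolding cl_def using le01 by auto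
  define g where "g = (\<lambda>h. fst (\<Gamma> e (\<tau> (cl h))))"
  have "continuous_on UNIV (\<tau> \<circ> cl)"
    by (rule continuous_on_compose[OF ccl continuous_on_subset[OF c\<tau>]]) (use clin in auto)
  then have "continuous_on UNIV (\<Gamma> e \<circ> (\<tau> \<circ> cl))"
    by (rule continuous_on_compose[OF _ continuous_on_subset[OF cG]]) (use clin \<tau>in in auto)
  then have cg: "continuous_on UNIV g" unfolding g_def
    by (intro continuous_intros) (simp add: o_def)
  have s0: "\<phi> 0 = snd (p (fst e))" and s1: "\<phi> 1 = snd (p (snd e))"
    unfolding \<phi>_def using edge_start[OF e] edge_finish[OF e] by auto
  show ?thesis
  proof (rule that[of g])
    show "continuous_on UNIV g" by (fact cg)
    fix h assume "h \<le> snd (p (fst e))"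
    then have "cl h = \<phi> 0" unfolding cl_def using le01 s0 by auto
    then show "g h = fst (p (fst e))" unfolding g_def using \<tau>\<phi>[of 0] edge_start[OF e] by auto
  next
    fix h assume "h \<ge> snd (p (snd e))"
    then have "cl h = \<phi> 1" unfolding cl_def using le01 s1 by auto
    then show "g h = fst (p (snd e))" unfolding g_def using \<tau>\<phi>[of 1] edge_finish[OF e] by auto
  next
    fix h assume h: "h \<in> {snd (p (fst e))..snd (p (snd e))}"
    then have "cl h = h" unfolding cl_def using s0 s1 by auto
    then have "\<tau> h \<in> {0..1}" "snd (\<Gamma> e (\<tau> h)) = h" "g h = fst (\<Gamma> e (\<tau> h))"
      using \<tau>in[of h] h s0 s1 unfolding \<phi>_def g_def by auto
    then show "\<exists>t\<in>{0..1}. \<Gamma> e t = (g h, h)" by (intro bexI[of _ "\<tau> h"]) (auto simp: prod_eq_iff)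
  next
    fix t :: real assume t: "t \<in> {0..1}"
    have "\<phi> t \<in> {\<phi> 0..\<phi> 1}" using img t by auto
    then have "cl (\<phi> t) = \<phi> t" unfolding cl_def by auto
    then show "fst (\<Gamma> e t) = g (snd (\<Gamma> e t))" unfolding g_def using \<tau>\<phi>[OF t]
      by (simp add: \<phi>_def)
  qed
qed

definition efun :: "'v \<times> 'v \<Rightarrow> (real \<Rightarrow> real) \<Rightarrow> bool" where
  "efun e g \<longleftrightarrow> continuous_on UNIV g \<and>
    (\<forall>h. h \<le> snd (p (fst e)) \<longrightarrow> g h = fst (p (fst e))) \<and>
    (\<forall>h. h \<ge> snd (p (snd e)) \<longrightarrow> g h = fst (p (snd e))) \<and>
    (\<forall>h \<in> {snd (p (fst e))..snd (p (snd e))}. \<exists>t\<in>{0..1}. \<Gamma> e t = (g h, h)) \<and>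
    (\<forall>t \<in> {0..1}. fst (\<Gamma> e t) = g (snd (\<Gamma> e t)))"

lemma efun_ex: "e \<in> E \<Longrightarrow> \<exists>g. efun e g"
  unfolding efun_def by (rule edge_fun) blast+

definition curve :: "(real \<Rightarrow> real) \<Rightarrow> 'v \<Rightarrow> 'v \<Rightarrow> bool" where
  "curve c s v \<longleftrightarrow> continuous_on UNIV c \<and>
    (\<forall>h. h \<le> snd (p s) \<longrightarrow> c h = fst (p s)) \<and>
    (\<forall>h. h \<ge> snd (p v) \<longrightarrow> c h = fst (p v)) \<and>
    (\<forall>h \<in> {snd (p s)..snd (p v)}. (c h, h) \<in> drawing_set V E p \<Gamma>) \<and> snd (p s) \<le> snd (p v)"

lemma efun_in_drawing:
  assumes "e \<in> E" "efun e g" "h \<in> {snd (p (fst e))..snd (p (snd e))}"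
  shows "(g h, h) \<in> drawing_set V E p \<Gamma>"
proof -
  obtain t where "t \<in> {0..1}" "\<Gamma> e t = (g h, h)" using assms unfolding efun_def by blast
  then have "(g h, h) \<in> path_image (\<Gamma> e)" unfolding path_image_def by force
  then show ?thesis using assms(1) unfolding drawing_set_def by blast
qed

lemma glue:
  assumes c: "curve c s (fst e)" and e: "e \<in> E" and g: "efun e g"
  shows "curve (\<lambda>h. c (min h (snd (p (fst e)))) + g (max h (snd (p (fst e)))) - fst (p (fst e))) s (snd e)"
proof -
  let ?u = "fst e" and ?v = "snd e"
  have up: "snd (p ?u) < snd (p ?v)" using edge_up[OF e] .
  have cc: "continuous_on UNIV c" and c1: "\<And>h. h \<le> snd (p s) \<Longrightarrow> c h = fst (p s)"
    and c2: "\<And>h. h \<ge> snd (p ?u) \<Longrightarrow> c h = fst (p ?u)"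
    and c3: "\<And>h. h \<in> {snd (p s)..snd (p ?u)} \<Longrightarrow> (c h, h) \<in> drawing_set V E p \<Gamma>"
    and c4: "snd (p s) \<le> snd (p ?u)" using c unfolding curve_def by auto
  have cg: "continuous_on UNIV g" and g1: "\<And>h. h \<le> snd (p ?u) \<Longrightarrow> g h = fst (p ?u)"
    and g2: "\<And>h. h \<ge> snd (p ?v) \<Longrightarrow> g h = fst (p ?v)"
    using g unfolding efun_def by auto
  have cont: "continuous_on UNIV (\<lambda>h. c (min h (snd (p ?u))) + g (max h (snd (p ?u))) - fst (p ?u))"
    by (intro continuous_intros continuous_on_compose2[OF cc] continuous_on_compose2[OF cg]) auto
  show ?thesis unfolding curve_def
  proof (intro conjI allI impI ballI cont)
    fix h assume "h \<le> snd (p s)"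
    then show "c (min h (snd (p ?u))) + g (max h (snd (p ?u))) - fst (p ?u) = fst (p s)"
      using c1 g1 c4 by auto
  next
    fix h assume "h \<ge> snd (p ?v)"
    then show "c (min h (snd (p ?u))) + g (max h (snd (p ?u))) - fst (p ?u) = fst (p ?v)"
      using c2 g2 up by auto
  next
    fix h assume h: "h \<in> {snd (p s)..snd (p ?v)}"
    show "(c (min h (snd (p ?u))) + g (max h (snd (p ?u))) - fst (p ?u), h) \<in> drawing_set V E p \<Gamma>"
    proof (cases "h \<le> snd (p ?u)")
      case True then show ?thesis using c3[of h] g1 h by auto
    next
      case False then show ?thesis using c2[of "snd (p ?u)"] efun_in_drawing[OF e g, of h] h by auto
    qed
  next
    show "snd (p s) \<le> snd (p ?v)" using c4 up by auto
  qed
qed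

lemma reach:
  assumes ss: "single_source V E"
  obtains s where "s \<in> V" "\<And>v. v \<in> V \<Longrightarrow> \<exists>c. curve c s v"
proof -
  obtain s where S: "{v \<in> V. indeg E v = 0} = {s}" using ss unfolding single_source_def
    by (rule card_1_singletonE) simp
  have sV: "s \<in> V" using S by blast
  have base: "curve (\<lambda>h. fst (p s)) s s" unfolding curve_def drawing_set_def using sV by auto
  have main: "\<forall>v\<in>V. card {w\<in>V. snd (p w) < snd (p v)} = n \<longrightarrow> (\<exists>c. curve c s v)" for n
  proof (induction n rule: less_induct)
    case (less n)
    show ?case
    proof (intro ballI impI)
      fix v assume v: "v \<in> V" and n: "card {w\<in>V. snd (p w) < snd (p v)} = n"
      show "\<exists>c. curve c s v"
      proof (cases "v = s")
        case True then show ?thesis using base by auto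
      next
        case False
        then have "v \<notin> {v \<in> V. indeg E v = 0}" using S by simp
        then have "indeg E v \<noteq> 0" using v by simp
        then have "{u. (u, v) \<in> E} \<noteq> {}" unfolding indeg_def by (metis card.empty)
        then obtain u where uv: "(u, v) \<in> E" by auto
        then have uV: "u \<in> V" using sub by auto
        have up: "snd (p u) < snd (p v)" using edge_up[OF uv] by simp
        have "{w\<in>V. snd (p w) < snd (p u)} \<subset> {w\<in>V. snd (p w) < snd (p v)}"
          using up uV by auto
        then have "card {w\<in>V. snd (p w) < snd (p u)} < n"
          using n psubset_card_mono[of "{w\<in>V. snd (p w) < snd (p v)}"] fin by simp
        then obtain c where "curve c s u" using less.IH uV by blast
        moreover obtain g where "efun (u, v) g" using efun_ex[OF uv] by auto
        ultimately show ?thesis using glue[of c s "(u,v)" g] uv by auto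
      qed
    qed
  qed
  show ?thesis using that sV main by blast
qed

lemma face_sub: "f \<in> faces V E p \<Gamma> \<Longrightarrow> f \<subseteq> - drawing_set V E p \<Gamma>"
  unfolding faces_def using in_components_subset by blast

lemma face_conn: "f \<in> faces V E p \<Gamma> \<Longrightarrow> connected f"
  unfolding faces_def using in_components_connected by blast

lemma region:
  assumes a: "curve a s v" and b: "curve b s v" and sV: "s \<in> V" and vV: "v \<in> V"
    and f: "f \<in> faces V E p \<Gamma>"
    and q: "q \<in> f" "snd (p s) < snd q" "snd q < snd (p v)"
       "min (a (snd q)) (b (snd q)) < fst q" "fst q < max (a (snd q)) (b (snd q))"
  shows "f \<subseteq> {z. snd (p s) < snd z \<and> snd z < snd (p v) \<and>
     min (a (snd z)) (b (snd z)) < fst z \<and> fst z < max (a (snd z)) (b (snd z))}"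
    (is "f \<subseteq> ?S")
proof -
  let ?T = "{z. snd (p s) \<le> snd z \<and> snd z \<le> snd (p v) \<and>
     min (a (snd z)) (b (snd z)) \<le> fst z \<and> fst z \<le> max (a (snd z)) (b (snd z))}"
  have ca: "continuous_on UNIV a" and cb: "continuous_on UNIV b"
    using a b unfolding curve_def by auto
  have cmin: "continuous_on UNIV (\<lambda>z::real\<times>real. min (a (snd z)) (b (snd z)))"
    by (intro continuous_intros continuous_on_compose2[OF ca] continuous_on_compose2[OF cb]) auto
  have cmax: "continuous_on UNIV (\<lambda>z::real\<times>real. max (a (snd z)) (b (snd z)))"
    by (intro continuous_intros continuous_on_compose2[OF ca] continuous_on_compose2[OF cb]) auto
  have csnd: "continuous_on UNIV (\<lambda>z::real\<times>real. snd z)" by (intro continuous_intros)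
  have cfst: "continuous_on UNIV (\<lambda>z::real\<times>real. fst z)" by (intro continuous_intros)
  have cc: "continuous_on UNIV (\<lambda>z::real\<times>real. c)" for c :: real by (intro continuous_intros)
  have eqS: "?S = {z. snd (p s) < snd z} \<inter> {z. snd z < snd (p v)} \<inter>
      {z. min (a (snd z)) (b (snd z)) < fst z} \<inter> {z. fst z < max (a (snd z)) (b (snd z))}" by auto
  have oS: "open ?S" unfolding eqS
    by (intro open_Int open_Collect_less cmin cmax csnd cfst cc)
  have eqT: "?T = {z. snd (p s) \<le> snd z} \<inter> {z. snd z \<le> snd (p v)} \<inter>
      {z. min (a (snd z)) (b (snd z)) \<le> fst z} \<inter> {z. fst z \<le> max (a (snd z)) (b (snd z))}" by auto
  have cT: "closed ?T" unfolding eqT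
    by (intro closed_Int closed_Collect_le cmin cmax csnd cfst cc)
  have TS: "z \<in> drawing_set V E p \<Gamma>" if z: "z \<in> ?T" "z \<notin> ?S" for z
  proof -
    obtain x h where zxh: "z = (x, h)" by fastforce
    have a1: "a (snd (p s)) = fst (p s)" "b (snd (p s)) = fst (p s)"
      and a2: "a (snd (p v)) = fst (p v)" "b (snd (p v)) = fst (p v)"
      and a3: "\<And>h. h \<in> {snd (p s)..snd (p v)} \<Longrightarrow> (a h, h) \<in> drawing_set V E p \<Gamma>"
      and b3: "\<And>h. h \<in> {snd (p s)..snd (p v)} \<Longrightarrow> (b h, h) \<in> drawing_set V E p \<Gamma>"
      using a b unfolding curve_def by auto
    have ps: "p s \<in> drawing_set V E p \<Gamma>" "p v \<in> drawing_set V E p \<Gamma>"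
      using sV vV unfolding drawing_set_def by auto
    show ?thesis
    proof (cases "h = snd (p s)")
      case True
      then have "z = p s" using z a1 zxh by (auto simp: prod_eq_iff)
      then show ?thesis using ps by simp
    next
      case False
      note F1 = False
      show ?thesis
      proof (cases "h = snd (p v)")
        case True
        then have "z = p v" using z a2 zxh by (auto simp: prod_eq_iff)
        then show ?thesis using ps by simp
      next
        case False
        then have hin: "h \<in> {snd (p s)..snd (p v)}" using z zxh by auto
        have "x = a h \<or> x = b h" using z zxh F1 False by (auto simp: min_def max_def split: if_splits)
        then show ?thesis using a3[OF hin] b3[OF hin] zxh by auto
      qed
    qed
  qed
  have fsub: "f \<subseteq> ?S \<union> - ?T" using face_sub[OF f] TS by blast
  have "?S \<inter> f = {} \<or> - ?T \<inter> f = {}"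
    by (rule connectedD[OF face_conn[OF f] oS]) (use cT fsub in auto)
  moreover have "q \<in> ?S \<inter> f" using q by auto
  ultimately show ?thesis using fsub by blast
qed

lemma finE: "finite E"
  using fin sub by (meson finite_SigmaI finite_subset)

lemma hug:
  assumes e: "e \<in> E" and g: "efun e g" and f: "f \<in> faces V E p \<Gamma>"
    and \<sigma>: "\<bar>\<sigma>\<bar> = (1::real)"
    and s0: "s0 \<in> {0<..<1}" and \<epsilon>: "\<epsilon> > 0"
    and inf: "\<forall>r\<in>{0<..<\<epsilon>}. (fst (\<Gamma> e s0) + \<sigma> * r, snd (\<Gamma> e s0)) \<in> f"
    and h1: "snd (\<Gamma> e s0) \<le> h1" "h1 < snd (p (snd e))"
  shows "\<exists>d>0. \<forall>r\<in>{0<..<d}. (g h1 + \<sigma> * r, h1) \<in> f"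
proof -
  let ?u = "fst e" and ?v = "snd e"
  define h0 where "h0 = snd (\<Gamma> e s0)"
  have yu: "snd (p ?u) < h0" using edge_mono[OF e, of 0 s0] edge_start[OF e] s0 unfolding h0_def by auto
  have cg: "continuous_on UNIV g" using g unfolding efun_def by auto
  have gpt: "\<And>h. h \<in> {snd (p ?u)..snd (p ?v)} \<Longrightarrow> \<exists>t\<in>{0..1}. \<Gamma> e t = (g h, h)"
    and gfst: "\<And>t. t \<in> {0..1} \<Longrightarrow> fst (\<Gamma> e t) = g (snd (\<Gamma> e t))"
    using g unfolding efun_def by auto
  define K where "K = (\<lambda>h. (g h, h)) ` {h0..h1}"
  define Ob where "Ob = p ` V \<union> (\<Union>e'\<in>E - {e}. path_image (\<Gamma> e'))"
  have cK: "compact K" unfolding K_def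
  proof -
    have "continuous_on UNIV (\<lambda>h. (g h, h))" by (intro continuous_intros cg)
    then show "compact ((\<lambda>h. (g h, h)) ` {h0..h1})"
      by (rule compact_continuous_image[OF continuous_on_subset[OF _ subset_UNIV] compact_Icc])
  qed
  have cO: "closed Ob" unfolding Ob_def
  proof (rule closed_Un)
    show "closed (p ` V)" using fin by (simp add: finite_imp_closed)
    show "closed (\<Union>e'\<in>E - {e}. path_image (\<Gamma> e'))"
      using finE by (auto intro!: closed_UN compact_imp_closed compact_path_image edge_path)
  qed
  have KO: "K \<inter> Ob = {}"
  proof (rule ccontr)
    assume "K \<inter> Ob \<noteq> {}"
    then obtain h where h: "h \<in> {h0..h1}" and hO: "(g h, h) \<in> Ob" unfolding K_def by blast
    have hin: "h \<in> {snd (p ?u)..snd (p ?v)}" using h yu h1 h0_def by auto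
    then obtain t where t: "t \<in> {0..1}" "\<Gamma> e t = (g h, h)" using gpt by blast
    have inimg: "(g h, h) \<in> path_image (\<Gamma> e)" using t unfolding path_image_def by force
    have "\<exists>w\<in>V. (g h, h) = p w \<and> (w = ?u \<or> w = ?v)"
    proof (cases "(g h, h) \<in> p ` V")
      case True
      then obtain w where w: "w \<in> V" "(g h, h) = p w" by auto
      then show ?thesis using vert_avoid[OF e w(1)] inimg by auto
    next
      case False
      then obtain e' where e': "e' \<in> E" "e' \<noteq> e" "(g h, h) \<in> path_image (\<Gamma> e')" using hO unfolding Ob_def by auto
      then have "(g h, h) \<in> p ` ({?u, ?v} \<inter> {fst e', snd e'})" using edge_disj[OF e e'(1)] inimg by blast
      then have "(g h, h) = p ?u \<or> (g h, h) = p ?v" by blast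
      moreover have "?u \<in> V" "?v \<in> V" using e sub by auto
      ultimately show ?thesis by blast
    qed
    then obtain w where w: "(g h, h) = p w" "w = ?u \<or> w = ?v" by blast
    then have "h = snd (p w)" by (metis snd_conv)
    then show False using h yu h1 h0_def w(2) by auto
  qed
  obtain \<delta> where \<delta>: "\<delta> > 0" "\<forall>x\<in>K. \<forall>y\<in>Ob. \<delta> \<le> dist x y"
    using separate_compact_closed[OF cK cO KO] by blast
  define T where "T = (\<lambda>x. (g (fst x) + \<sigma> * snd x, fst x)) ` ({h0..h1} \<times> {0<..<\<delta>})"
  have conT: "connected T" unfolding T_def
  proof -
    have "continuous_on UNIV (\<lambda>x::real\<times>real. (g (fst x) + \<sigma> * snd x, fst x))"
      by (intro continuous_intros continuous_on_compose2[OF cg]) auto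
    moreover have "connected ({h0..h1} \<times> {0<..<\<delta>})"
      by (intro convex_connected convex_Times convex_real_interval)
    ultimately show "connected ((\<lambda>x. (g (fst x) + \<sigma> * snd x, fst x)) ` ({h0..h1} \<times> {0<..<\<delta>}))"
      by (rule connected_continuous_image[OF continuous_on_subset[OF _ subset_UNIV]])
  qed
  have Tsub: "T \<subseteq> - drawing_set V E p \<Gamma>"
  proof
    fix z assume "z \<in> T"
    then obtain h r where hr: "h \<in> {h0..h1}" "r \<in> {0<..<\<delta>}" "z = (g h + \<sigma> * r, h)" unfolding T_def by auto
    have "(g h, h) \<in> K" using hr unfolding K_def by auto
    moreover have "dist z (g h, h) < \<delta>" using hr \<sigma> by (simp add: dist_Pair_Pair dist_real_def abs_mult)
    ultimately have zO: "z \<notin> Ob" using \<delta> by (metis dist_commute not_less)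
    have "z \<notin> path_image (\<Gamma> e)"
    proof
      assume "z \<in> path_image (\<Gamma> e)"
      then obtain t where "t \<in> {0..1}" "\<Gamma> e t = z" unfolding path_image_def by auto
      then have "fst z = g (snd z)" using gfst by force
      then show False using hr \<sigma> by auto
    qed
    then show "z \<in> - drawing_set V E p \<Gamma>" using zO unfolding Ob_def drawing_set_def by auto
  qed
  define r0 where "r0 = min \<epsilon> \<delta> / 2"
  have r0: "r0 \<in> {0<..<\<epsilon>}" "r0 \<in> {0<..<\<delta>}" using \<epsilon> \<delta> unfolding r0_def by auto
  have "g h0 = fst (\<Gamma> e s0)" using gfst[of s0] s0 unfolding h0_def by auto
  then have "(g h0 + \<sigma> * r0, h0) \<in> f" using inf r0 unfolding h0_def by auto
  moreover have "(g h0 + \<sigma> * r0, h0) \<in> T" unfolding T_def using r0 h1 h0_def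
    by (intro image_eqI[of _ _ "(h0, r0)"]) auto
  ultimately have "f \<inter> T \<noteq> {}" by blast
  then have "T \<subseteq> f" using components_maximal[of f "- drawing_set V E p \<Gamma>" T] f conT Tsub
    unfolding faces_def by auto
  moreover have "\<forall>r\<in>{0<..<\<delta>}. (g h1 + \<sigma> * r, h1) \<in> T" unfolding T_def using h1 h0_def
    by (auto intro!: image_eqI)
  ultimately show ?thesis using \<delta> by blast
qed

lemma cont_pt:
  assumes "continuous_on UNIV (g :: real \<Rightarrow> real)" "\<epsilon> > 0"
  shows "\<exists>\<eta>>0. \<forall>h. \<bar>h - x\<bar> < \<eta> \<longrightarrow> \<bar>g h - g x\<bar> < \<epsilon>"
  using assms unfolding continuous_on_iff dist_real_def by blast

lemma efun_pt:
  assumes "e \<in> E" "efun e g" "h \<in> {snd (p (fst e))..<snd (p (snd e))}"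
  obtains t where "t \<in> {0..<1}" "\<Gamma> e t = (g h, h)"
proof -
  have "h \<in> {snd (p (fst e))..snd (p (snd e))}" using assms(3) by auto
  then obtain t where t: "t \<in> {0..1}" "\<Gamma> e t = (g h, h)" using assms(2) unfolding efun_def by blast
  have "t \<noteq> 1" using t assms edge_finish[OF assms(1)] by (auto simp: prod_eq_iff)
  then have "t \<in> {0..<1}" using t by auto
  then show ?thesis using that t(2) by blast
qed

lemma lae:
  assumes e1: "e1 \<in> E" and e2: "e2 \<in> E" and sn: "snd e1 = snd e2"
    and g1: "efun e1 g1" and g2: "efun e2 g2" and L: "left_at_end \<Gamma> e1 e2"
  shows "\<exists>\<delta>>0. \<forall>h. snd (p (snd e1)) - \<delta> < h \<and> h < snd (p (snd e1)) \<and>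
     snd (p (fst e1)) \<le> h \<and> snd (p (fst e2)) \<le> h \<longrightarrow> g1 h < g2 h"
proof -
  obtain \<delta> where \<delta>: "\<delta> > 0" and H: "\<forall>s\<in>{0..<1}. \<forall>t\<in>{0..<1}.
      snd (\<Gamma> e1 s) = snd (\<Gamma> e2 t) \<and> snd (\<Gamma> e1 1) - \<delta> < snd (\<Gamma> e1 s) \<longrightarrow> fst (\<Gamma> e1 s) < fst (\<Gamma> e2 t)"
    using L unfolding left_at_end_def by blast
  show ?thesis
  proof (intro exI[of _ \<delta>] conjI allI impI \<delta>)
    fix h assume h: "snd (p (snd e1)) - \<delta> < h \<and> h < snd (p (snd e1)) \<and>
     snd (p (fst e1)) \<le> h \<and> snd (p (fst e2)) \<le> h"
    obtain s where s: "s \<in> {0..<1}" "\<Gamma> e1 s = (g1 h, h)" using efun_pt[OF e1 g1, of h] h by auto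
    obtain t where t: "t \<in> {0..<1}" "\<Gamma> e2 t = (g2 h, h)" using efun_pt[OF e2 g2, of h] h sn by auto
    show "g1 h < g2 h" using H s t h edge_finish[OF e1] by force
  qed
qed

lemma bad_data:
  assumes e: "e \<in> E" and bad: "bad_edge E \<Gamma> e f"
  obtains \<sigma> e' s0 \<epsilon>0 g g' \<delta> where "\<bar>\<sigma>\<bar> = (1::real)" "e' \<in> E" "snd e' = snd e"
    "efun e g" "efun e' g'" "s0 \<in> {0<..<1}" "\<epsilon>0 > 0"
    "\<forall>r\<in>{0<..<\<epsilon>0}. (fst (\<Gamma> e s0) + \<sigma> * r, snd (\<Gamma> e s0)) \<in> f"
    "\<delta> > 0" "\<forall>h. snd (p (snd e)) - \<delta> < h \<and> h < snd (p (snd e)) \<and>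
        snd (p (fst e)) \<le> h \<and> snd (p (fst e')) \<le> h \<longrightarrow> 0 < \<sigma> * (g' h - g h)"
proof -
  obtain g where g: "efun e g" using efun_ex[OF e] by blast
  show ?thesis
  proof (cases "left_in E \<Gamma> e \<and> face_right_of \<Gamma> e f")
    case True
    then obtain e' where e': "e' \<in> E" "snd e' = snd e" "left_at_end \<Gamma> e e'"
      unfolding left_in_def by auto
    obtain g' where g': "efun e' g'" using efun_ex[OF e'(1)] by blast
    obtain \<delta> where \<delta>: "\<delta> > 0" "\<forall>h. snd (p (snd e)) - \<delta> < h \<and> h < snd (p (snd e)) \<and>
     snd (p (fst e)) \<le> h \<and> snd (p (fst e')) \<le> h \<longrightarrow> g h < g' h"
      using lae[OF e e'(1) e'(2)[symmetric] g g' e'(3)] by blast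
    obtain s0 \<epsilon> where s0: "s0 \<in> {0<..<1}" "\<epsilon> > 0"
      "\<forall>r\<in>{0<..<\<epsilon>}. (fst (\<Gamma> e s0) + r, snd (\<Gamma> e s0)) \<in> f"
      using True unfolding face_right_of_def by blast
    show ?thesis
      by (rule that[of 1 e' g g' s0 \<epsilon> \<delta>]) (use e' g g' s0 \<delta> in auto)
  next
    case False
    then have T: "right_in E \<Gamma> e \<and> face_left_of \<Gamma> e f" using bad unfolding bad_edge_def by blast
    then obtain e' where e': "e' \<in> E" "snd e' = snd e" "left_at_end \<Gamma> e' e"
      unfolding right_in_def by auto
    obtain g' where g': "efun e' g'" using efun_ex[OF e'(1)] by blast
    obtain \<delta> where \<delta>: "\<delta> > 0" "\<forall>h. snd (p (snd e')) - \<delta> < h \<and> h < snd (p (snd e')) \<and>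
     snd (p (fst e')) \<le> h \<and> snd (p (fst e)) \<le> h \<longrightarrow> g' h < g h"
      using lae[OF e'(1) e e'(2) g' g e'(3)] by blast
    obtain s0 \<epsilon> where s0: "s0 \<in> {0<..<1}" "\<epsilon> > 0"
      "\<forall>r\<in>{0<..<\<epsilon>}. (fst (\<Gamma> e s0) - r, snd (\<Gamma> e s0)) \<in> f"
      using T unfolding face_left_of_def by blast
    show ?thesis
      by (rule that[of "-1" e' g g' s0 \<epsilon> \<delta>]) (use e' g g' s0 \<delta> in auto)
  qed
qed

lemma curve_at:
  assumes "curve c s u" "e \<in> E" "efun e g" "fst e = u" "h \<ge> snd (p u)"
  shows "c (min h (snd (p (fst e)))) + g (max h (snd (p (fst e)))) - fst (p (fst e)) = g h"
  using assms unfolding curve_def by auto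

lemma bad_lem:
  assumes sV: "s \<in> V" and R: "\<And>v. v \<in> V \<Longrightarrow> \<exists>c. curve c s v"
    and e: "e \<in> E" and f: "f \<in> faces V E p \<Gamma>" and bad: "bad_edge E \<Gamma> e f"
  shows "\<exists>a b. curve a s (snd e) \<and> curve b s (snd e) \<and> f \<subseteq> {z. snd (p s) < snd z \<and> snd z < snd (p (snd e)) \<and>
     min (a (snd z)) (b (snd z)) < fst z \<and> fst z < max (a (snd z)) (b (snd z))}"
    and "\<forall>\<epsilon>>0. \<exists>z\<in>f. \<bar>fst z - fst (p (snd e))\<bar> < \<epsilon> \<and> \<bar>snd z - snd (p (snd e))\<bar> < \<epsilon>"
proof -
  obtain \<sigma> e' s0 \<epsilon>0 g g' \<delta> where \<sigma>: "\<bar>\<sigma>\<bar> = (1::real)" and e': "e' \<in> E" "snd e' = snd e"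
    and g: "efun e g" and g': "efun e' g'" and s0: "s0 \<in> {0<..<1}" and \<epsilon>0: "\<epsilon>0 > 0"
    and inf: "\<forall>r\<in>{0<..<\<epsilon>0}. (fst (\<Gamma> e s0) + \<sigma> * r, snd (\<Gamma> e s0)) \<in> f"
    and \<delta>: "\<delta> > 0" and ord: "\<forall>h. snd (p (snd e)) - \<delta> < h \<and> h < snd (p (snd e)) \<and>
        snd (p (fst e)) \<le> h \<and> snd (p (fst e')) \<le> h \<longrightarrow> 0 < \<sigma> * (g' h - g h)"
    using bad_data[OF e bad] by metis
  define u where "u = fst e"
  define v where "v = snd e"
  define u' where "u' = fst e'"
  have uV: "u \<in> V" "v \<in> V" "u' \<in> V" using e e' sub unfolding u_def v_def u'_def by auto
  define h0 where "h0 = snd (\<Gamma> e s0)"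
  have yu: "snd (p u) < h0" using edge_mono[OF e, of 0 s0] edge_start[OF e] s0 unfolding h0_def u_def by auto
  have yv: "h0 < snd (p v)" using edge_mono[OF e, of s0 1] edge_finish[OF e] s0 unfolding h0_def v_def by auto
  have yu': "snd (p u') < snd (p v)" using edge_up[OF e'(1)] e'(2) unfolding u'_def v_def by auto
  have gv: "g (snd (p v)) = fst (p v)" using g unfolding efun_def v_def by auto
  have cg: "continuous_on UNIV g" using g unfolding efun_def by auto
  have hug': "\<exists>d>0. \<forall>r\<in>{0<..<d}. (g h1 + \<sigma> * r, h1) \<in> f" if "h0 \<le> h1" "h1 < snd (p v)" for h1
    using hug[OF e g f \<sigma> s0 \<epsilon>0 inf] that unfolding h0_def v_def by auto
  show "\<exists>a b. curve a s (snd e) \<and> curve b s (snd e) \<and> f \<subseteq> {z. snd (p s) < snd z \<and> snd z < snd (p (snd e)) \<and>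
     min (a (snd z)) (b (snd z)) < fst z \<and> fst z < max (a (snd z)) (b (snd z))}"
  proof -
    define h1 where "h1 = max h0 (max (snd (p v) - \<delta> / 2) (snd (p u')))"
    have h1: "h0 \<le> h1" "h1 < snd (p v)" "snd (p v) - \<delta> < h1" "snd (p u) \<le> h1" "snd (p u') \<le> h1"
      using yu yv yu' \<delta> unfolding h1_def by auto
    have pos: "0 < \<sigma> * (g' h1 - g h1)" using ord h1 unfolding u_def u'_def v_def by auto
    obtain d where d: "d > 0" "\<forall>r\<in>{0<..<d}. (g h1 + \<sigma> * r, h1) \<in> f" using hug' h1 by blast
    define r where "r = min d \<bar>g' h1 - g h1\<bar> / 2"
    have "g' h1 \<noteq> g h1" using pos by auto
    then have "\<bar>g' h1 - g h1\<bar> > 0" by auto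
    moreover have "min d \<bar>g' h1 - g h1\<bar> \<le> d" "min d \<bar>g' h1 - g h1\<bar> \<le> \<bar>g' h1 - g h1\<bar>" by auto
    moreover have "min d \<bar>g' h1 - g h1\<bar> > 0" using d(1) \<open>\<bar>g' h1 - g h1\<bar> > 0\<close> by simp
    ultimately have r: "0 < r" "r < d" "r < \<bar>g' h1 - g h1\<bar>" unfolding r_def
      by (linarith, linarith, linarith)
    obtain cu where cu: "curve cu s u" using R uV by blast
    obtain cu' where cu': "curve cu' s u'" using R uV by blast
    define a where "a = (\<lambda>h. cu (min h (snd (p (fst e)))) + g (max h (snd (p (fst e)))) - fst (p (fst e)))"
    define b where "b = (\<lambda>h. cu' (min h (snd (p (fst e')))) + g' (max h (snd (p (fst e')))) - fst (p (fst e')))"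
    have ca: "curve a s v" unfolding a_def v_def by (rule glue[OF _ e g]) (use cu u_def in simp)
    have cb: "curve b s v" unfolding b_def v_def e'(2)[symmetric] by (rule glue[OF _ e'(1) g']) (use cu' u'_def in simp)
    have ah: "a h1 = g h1" unfolding a_def by (rule curve_at[OF cu e g]) (use h1 u_def in auto)
    have bh: "b h1 = g' h1" unfolding b_def by (rule curve_at[OF cu' e'(1) g']) (use h1 u'_def in auto)
    have ys: "snd (p s) \<le> snd (p u)" using cu unfolding curve_def by auto
    define q where "q = (g h1 + \<sigma> * r, h1)"
    have qf: "q \<in> f" using d r unfolding q_def by auto
    have qb: "min (a (snd q)) (b (snd q)) < fst q \<and> fst q < max (a (snd q)) (b (snd q))"
    proof -
      have "\<sigma> = 1 \<or> \<sigma> = -1" using \<sigma> by auto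
      then show ?thesis
      proof
        assume s1: "\<sigma> = 1"
        then have "g h1 < g' h1" using pos by auto
        then show ?thesis using r ah bh s1 unfolding q_def by auto
      next
        assume s1: "\<sigma> = -1"
        then have "g' h1 < g h1" using pos by auto
        then show ?thesis using r ah bh s1 unfolding q_def by auto
      qed
    qed
    have "f \<subseteq> {z. snd (p s) < snd z \<and> snd z < snd (p v) \<and>
     min (a (snd z)) (b (snd z)) < fst z \<and> fst z < max (a (snd z)) (b (snd z))}"
      by (rule region[OF ca cb sV uV(2) f qf]) (use qb h1 yu ys in \<open>auto simp: q_def\<close>)
    then show ?thesis using ca cb unfolding v_def by blast
  qed
  show "\<forall>\<epsilon>>0. \<exists>z\<in>f. \<bar>fst z - fst (p (snd e))\<bar> < \<epsilon> \<and> \<bar>snd z - snd (p (snd e))\<bar> < \<epsilon>"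
  proof (intro allI impI)
    fix \<epsilon> :: real assume \<epsilon>: "\<epsilon> > 0"
    obtain \<eta> where \<eta>: "\<eta> > 0" "\<forall>h. \<bar>h - snd (p v)\<bar> < \<eta> \<longrightarrow> \<bar>g h - g (snd (p v))\<bar> < \<epsilon> / 2"
      using cont_pt[OF cg, of "\<epsilon> / 2" "snd (p v)"] \<epsilon> by auto
    define m where "m = min \<eta> (\<epsilon> / 2)"
    have m: "m > 0" "m \<le> \<eta>" "m \<le> \<epsilon> / 2" using \<eta> \<epsilon> unfolding m_def by auto
    define h where "h = max h0 (snd (p v) - m / 2)"
    have h: "h0 \<le> h" "h < snd (p v)" "\<bar>h - snd (p v)\<bar> < m" using yv m unfolding h_def by auto
    obtain d where d: "d > 0" "\<forall>r\<in>{0<..<d}. (g h + \<sigma> * r, h) \<in> f" using hug' h by blast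
    define r where "r = min d (\<epsilon> / 2) / 2"
    have r: "0 < r" "r < d" "r < \<epsilon> / 2" unfolding r_def using d \<epsilon> by auto
    have zf: "(g h + \<sigma> * r, h) \<in> f" using d r by auto
    have "\<bar>g h - fst (p v)\<bar> < \<epsilon> / 2" using \<eta>(2) h m gv by auto
    moreover have "\<bar>\<sigma> * r\<bar> = r" using \<sigma> r by (simp add: abs_mult)
    ultimately have "\<bar>g h + \<sigma> * r - fst (p v)\<bar> < \<epsilon>" using r by linarith
    moreover have "\<bar>h - snd (p v)\<bar> < \<epsilon>" using h m by auto
    ultimately show "\<exists>z\<in>f. \<bar>fst z - fst (p (snd e))\<bar> < \<epsilon> \<and> \<bar>snd z - snd (p (snd e))\<bar> < \<epsilon>"
      using zf unfolding v_def by force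
  qed
qed

lemma le_height:
  assumes fS: "f \<subseteq> {z. snd (p s) < snd z \<and> snd z < snd (p v1) \<and>
     min (a (snd z)) (b (snd z)) < fst z \<and> fst z < max (a (snd z)) (b (snd z))}"
    and ap: "\<forall>\<epsilon>>0. \<exists>z\<in>f. \<bar>fst z - fst (p v2)\<bar> < \<epsilon> \<and> \<bar>snd z - snd (p v2)\<bar> < \<epsilon>"
  shows "snd (p v2) \<le> snd (p v1)"
proof (rule ccontr)
  assume "\<not> ?thesis"
  then have "snd (p v2) - snd (p v1) > 0" by simp
  then obtain z where z: "z \<in> f" "\<bar>snd z - snd (p v2)\<bar> < snd (p v2) - snd (p v1)"
    using ap by blast
  then have "snd z > snd (p v1)" by linarith
  moreover have "snd z < snd (p v1)" using fS z(1) by blast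
  ultimately show False by simp
qed

lemma eq_x:
  assumes a: "curve a s v1" and b: "curve b s v1"
    and fS: "f \<subseteq> {z. snd (p s) < snd z \<and> snd z < snd (p v1) \<and>
     min (a (snd z)) (b (snd z)) < fst z \<and> fst z < max (a (snd z)) (b (snd z))}"
    and ap: "\<forall>\<epsilon>>0. \<exists>z\<in>f. \<bar>fst z - fst (p v2)\<bar> < \<epsilon> \<and> \<bar>snd z - snd (p v2)\<bar> < \<epsilon>"
    and Y: "snd (p v2) = snd (p v1)"
  shows "fst (p v2) = fst (p v1)"
proof (rule ccontr)
  assume ne: "\<not> ?thesis"
  define d where "d = \<bar>fst (p v2) - fst (p v1)\<bar>"
  have d: "d > 0" using ne unfolding d_def by auto
  have ca: "continuous_on UNIV a" and cb: "continuous_on UNIV b"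
    and aY: "a (snd (p v1)) = fst (p v1)" and bY: "b (snd (p v1)) = fst (p v1)"
    using a b unfolding curve_def by auto
  obtain \<eta>1 where \<eta>1: "\<eta>1 > 0" "\<forall>h. \<bar>h - snd (p v1)\<bar> < \<eta>1 \<longrightarrow> \<bar>a h - a (snd (p v1))\<bar> < d / 2"
    using cont_pt[OF ca, of "d/2" "snd (p v1)"] d by auto
  obtain \<eta>2 where \<eta>2: "\<eta>2 > 0" "\<forall>h. \<bar>h - snd (p v1)\<bar> < \<eta>2 \<longrightarrow> \<bar>b h - b (snd (p v1))\<bar> < d / 2"
    using cont_pt[OF cb, of "d/2" "snd (p v1)"] d by auto
  define \<epsilon> where "\<epsilon> = min (min \<eta>1 \<eta>2) (d / 2)"
  have \<epsilon>: "\<epsilon> > 0" "\<epsilon> \<le> \<eta>1" "\<epsilon> \<le> \<eta>2" "\<epsilon> \<le> d / 2" using \<eta>1 \<eta>2 d unfolding \<epsilon>_def by auto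
  obtain z where z: "z \<in> f" "\<bar>fst z - fst (p v2)\<bar> < \<epsilon>" "\<bar>snd z - snd (p v2)\<bar> < \<epsilon>"
    using ap \<epsilon> by blast
  have h: "\<bar>snd z - snd (p v1)\<bar> < \<eta>1" "\<bar>snd z - snd (p v1)\<bar> < \<eta>2" using z Y \<epsilon> by auto
  have A: "\<bar>a (snd z) - fst (p v1)\<bar> < d / 2" using \<eta>1 h aY by auto
  have B: "\<bar>b (snd z) - fst (p v1)\<bar> < d / 2" using \<eta>2 h bY by auto
  have "min (a (snd z)) (b (snd z)) < fst z" "fst z < max (a (snd z)) (b (snd z))" using fS z by auto
  moreover have "\<bar>min (a (snd z)) (b (snd z)) - fst (p v1)\<bar> < d / 2"
    using A B by (cases "a (snd z) \<le> b (snd z)") (simp_all add: min_def)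
  moreover have "\<bar>max (a (snd z)) (b (snd z)) - fst (p v1)\<bar> < d / 2"
    using A B by (cases "a (snd z) \<le> b (snd z)") (simp_all add: max_def)
  ultimately have "\<bar>fst z - fst (p v1)\<bar> < d / 2" unfolding abs_less_iff by linarith
  moreover have "d \<le> \<bar>fst z - fst (p v1)\<bar> + \<bar>fst z - fst (p v2)\<bar>" unfolding d_def by arith
  ultimately show False using z(2) \<epsilon>(4) by linarith
qed

lemma same_head:
  assumes sV: "s \<in> V" and R: "\<And>v. v \<in> V \<Longrightarrow> \<exists>c. curve c s v"
    and f: "f \<in> faces V E p \<Gamma>"
    and e1: "e1 \<in> E" "bad_edge E \<Gamma> e1 f" and e2: "e2 \<in> E" "bad_edge E \<Gamma> e2 f"
  shows "snd e1 = snd e2"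
proof -
  obtain a1 b1 where A1: "curve a1 s (snd e1)" "curve b1 s (snd e1)"
    "f \<subseteq> {z. snd (p s) < snd z \<and> snd z < snd (p (snd e1)) \<and>
     min (a1 (snd z)) (b1 (snd z)) < fst z \<and> fst z < max (a1 (snd z)) (b1 (snd z))}"
    using bad_lem(1)[OF sV R e1(1) f e1(2)] by blast
  obtain a2 b2 where A2: "curve a2 s (snd e2)" "curve b2 s (snd e2)"
    "f \<subseteq> {z. snd (p s) < snd z \<and> snd z < snd (p (snd e2)) \<and>
     min (a2 (snd z)) (b2 (snd z)) < fst z \<and> fst z < max (a2 (snd z)) (b2 (snd z))}"
    using bad_lem(1)[OF sV R e2(1) f e2(2)] by blast
  have P1: "\<forall>\<epsilon>>0. \<exists>z\<in>f. \<bar>fst z - fst (p (snd e1))\<bar> < \<epsilon> \<and> \<bar>snd z - snd (p (snd e1))\<bar> < \<epsilon>"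
    using bad_lem(2)[OF sV R e1(1) f e1(2)] .
  have P2: "\<forall>\<epsilon>>0. \<exists>z\<in>f. \<bar>fst z - fst (p (snd e2))\<bar> < \<epsilon> \<and> \<bar>snd z - snd (p (snd e2))\<bar> < \<epsilon>"
    using bad_lem(2)[OF sV R e2(1) f e2(2)] .
  have "snd (p (snd e2)) \<le> snd (p (snd e1))" by (rule le_height[OF A1(3) P2])
  moreover have "snd (p (snd e1)) \<le> snd (p (snd e2))" by (rule le_height[OF A2(3) P1])
  ultimately have Y: "snd (p (snd e2)) = snd (p (snd e1))" by simp
  have X: "fst (p (snd e2)) = fst (p (snd e1))" by (rule eq_x[OF A1 P2 Y])
  have "p (snd e2) = p (snd e1)" using X Y by (simp add: prod_eq_iff)
  moreover have "snd e1 \<in> V" "snd e2 \<in> V" using e1 e2 sub by auto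
  ultimately show ?thesis using injp by (metis inj_on_def)
qed

end

theorem mainTheorem6:
  fixes V :: "'v set" and E :: "('v \<times> 'v) set"
  assumes "finite V" and "E \<subseteq> V \<times> V"
    and "single_source V E"
    and "\<forall>v\<in>V. indeg E v \<le> 2 \<and> outdeg E v \<le> 2"
    and "upward_planar V E"
  shows "\<forall>p \<Gamma>. upward_planar_drawing V E p \<Gamma> \<longrightarrow>
           (\<forall>f\<in>faces V E p \<Gamma>. card {e \<in> E. bad_edge E \<Gamma> e f} \<le> 2)"
proof (intro allI impI ballI)
  fix p \<Gamma> f
  assume dr: "upward_planar_drawing V E p \<Gamma>" and f: "f \<in> faces V E p \<Gamma>"
  interpret drw V E p \<Gamma> using assms(1,2) dr by unfold_locales
  obtain s where sV: "s \<in> V" and R: "\<And>v. v \<in> V \<Longrightarrow> \<exists>c. curve c s v"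
    using reach[OF assms(3)] by blast
  let ?B = "{e \<in> E. bad_edge E \<Gamma> e f}"
  show "card ?B \<le> 2"
  proof (cases "?B = {}")
    case True then show ?thesis unfolding True by simp
  next
    case False
    then obtain e0 where e0: "e0 \<in> E" "bad_edge E \<Gamma> e0 f" by auto
    define v where "v = snd e0"
    have vV: "v \<in> V" using e0 assms(2) unfolding v_def by auto
    have "?B \<subseteq> (\<lambda>u. (u, v)) ` {u. (u, v) \<in> E}"
    proof
      fix e assume "e \<in> ?B"
      then have "e \<in> E" "snd e = v" using same_head[OF sV R f _ _ e0] unfolding v_def by auto
      then show "e \<in> (\<lambda>u. (u, v)) ` {u. (u, v) \<in> E}" by (intro image_eqI[of _ _ "fst e"]) auto
    qed
    moreover have "{u. (u, v) \<in> E} \<subseteq> V" using assms(2) by auto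
    then have fin: "finite {u. (u, v) \<in> E}" using assms(1) by (rule finite_subset)
    ultimately have "card ?B \<le> card ((\<lambda>u. (u, v)) ` {u. (u, v) \<in> E})"
      by (intro card_mono finite_imageI)
    also have "\<dots> \<le> card {u. (u, v) \<in> E}" by (rule card_image_le[OF fin])
    also have "\<dots> = indeg E v" unfolding indeg_def by simp
    also have "\<dots> \<le> 2" using assms(4) vV by auto
    finally show ?thesis .
  qed
qed

end
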